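(* Let $H_\bullet,G_\bullet$ be braided crossed modules and let $E$ be a braided butterfly from $H_\bullet$ to $G_\bullet$, with maps $\kappa\colon H_1\to E$, $\imath\colon G_1\to E$, $\pi\colon E\to H_0$, $\jmath\colon E\to G_0$. (1) If the corresponding weak morphism $\mathscr H\to\mathscr G$ is essentially surjective, equivalently if $\jmath\colon E\to G_0$ is an epimorphism of sheaves, then $H_\bullet$ symmetric (resp. Picard) implies $G_\bullet$ symmetric (resp. Picard). (2) If $\mathscr H\to\mathscr G$ has trivial homotopy kernel, equivalently if $\kappa\colon H_1\to E$ is injective, then $G_\bullet$ symmetric (resp. Picard) implies $H_\bullet$ symmetric (resp. Picard).
   Context: $\mathcal S$ is a site with subcanonical topology; groups are sheaves of groups. A crossed module $[G_1\xrightarrow{\partial}G_0]$ (right action $g\mapsto g^x$, $\partial(g^x)=x^{-1}\partial(g)x$, $g_0^{\partial g_1}=g_1^{-1}g_0g_1$) is braided by a map $\{-,-\}\colon G_0\times G_0\to G_1$ with $\partial\{x,y\}=y^{-1}x^{-1}yx$, $\{x,yz\}=\{x,y\}^z\{x,z\}$, $\{xy,z\}=\{y,z\}\{x,z\}^y$, $\{x,\partial h\}=h^{-1}h^x$, $\{\partial g,y\}=(g^y)^{-1}g$; the associated gr-stack $\mathscr G=[G_1\to G_0]^\sim$ is then braided, with braiding $s_{X,Y}\colon X\otimes Y\to Y\otimes X$. A braided crossed module is symmetric (resp. Picard) if the braiding of its gr-stack satisfies $s_{Y,X}s_{X,Y}=\mathrm{id}$ for all $X,Y$ (resp. additionally $s_{X,X}=\mathrm{id}$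 for all $X$). A butterfly from $H_\bullet$ to $G_\bullet$ is a group $E$ with maps as in the claim such that $\pi\kappa=\partial_H$, $\jmath\imath=\partial_G$, $\jmath\kappa=1$, $1\to G_1\to E\to H_0\to1$ short exact, $\imath(g^{\jmath(e)})=e^{-1}\imath(g)e$, $\kappa(h^{\pi(e)})=e^{-1}\kappa(h)e$; it is braided if $\kappa\{\pi(x),\pi(y)\}_H\,\imath\{\jmath(x),\jmath(y)\}_G=y^{-1}x^{-1}yx$ for all $x,y\in E$. Its weak morphism is the additive functor $\mathscr H=[H_1\to H_0]^\sim\to\mathscr G$ given by $P^\sim\circ(Q^\sim)^{-1}$ with $Q=(\mathrm{pr}_1,\pi)$, $P=(\mathrm{pr}_2,\jmath)$ the strict morphisms from $[H_1\times G_1\xrightarrow{\kappa\cdot\imath}E]$. *)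

theory Defs
  imports "HOL-Algebra.Group"
begin

section \<open>Sites (Grothendieck topologies given by covering sieves)\<close>

record ('o,'m) site_data =
  Obj :: "'o set"
  Arr :: "'m set"
  Dom :: "'m \<Rightarrow> 'o"
  Cod :: "'m \<Rightarrow> 'o"
  Idm :: "'o \<Rightarrow> 'm"
  Cmp :: "'m \<Rightarrow> 'm \<Rightarrow> 'm"   (* Cmp f g = f \<circ> g, defined when Dom f = Cod g *)
  Cov :: "'o \<Rightarrow> 'm set set"

definition is_category :: "('o,'m,'z) site_data_scheme \<Rightarrow> bool" where
  "is_category C \<longleftrightarrow>
     (\<forall>f\<in>Arr C. Dom C f \<in> Obj C \<and> Cod C f \<in> Obj C) \<and>
     (\<forall>X\<in>Obj C. Idm C X \<in> Arr C \<and> Dom C (Idm C X) = X \<and> Cod C (Idm C X) = X) \<and>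
     (\<forall>f\<in>Arr C. \<forall>g\<in>Arr C. Dom C f = Cod C g \<longrightarrow>
        Cmp C f g \<in> Arr C \<and> Dom C (Cmp C f g) = Dom C g \<and> Cod C (Cmp C f g) = Cod C f) \<and>
     (\<forall>f\<in>Arr C. Cmp C f (Idm C (Dom C f)) = f \<and> Cmp C (Idm C (Cod C f)) f = f) \<and>
     (\<forall>f\<in>Arr C. \<forall>g\<in>Arr C. \<forall>h\<in>Arr C. Dom C f = Cod C g \<and> Dom C g = Cod C h \<longrightarrow>
        Cmp C (Cmp C f g) h = Cmp C f (Cmp C g h))"

definition arrows_into :: "('o,'m,'z) site_data_scheme \<Rightarrow> 'o \<Rightarrow> 'm set" where
  "arrows_into C U = {f\<in>Arr C. Cod C f = U}"

definition is_sieve :: "('o,'m,'z) site_data_scheme \<Rightarrow> 'o \<Rightarrow> 'm set \<Rightarrow> bool" where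
  "is_sieve C U S \<longleftrightarrow> S \<subseteq> arrows_into C U \<and>
     (\<forall>f\<in>S. \<forall>g\<in>Arr C. Cod C g = Dom C f \<longrightarrow> Cmp C f g \<in> S)"

definition pullback_sieve :: "('o,'m,'z) site_data_scheme \<Rightarrow> 'm \<Rightarrow> 'm set \<Rightarrow> 'm set" where
  "pullback_sieve C f S = {g\<in>Arr C. Cod C g = Dom C f \<and> Cmp C f g \<in> S}"

definition is_site :: "('o,'m,'z) site_data_scheme \<Rightarrow> bool" where
  "is_site C \<longleftrightarrow> is_category C \<and>
     (\<forall>U. U \<notin> Obj C \<longrightarrow> Cov C U = {}) \<and>
     (\<forall>U\<in>Obj C. \<forall>S\<in>Cov C U. is_sieve C U S) \<and>
     (\<forall>U\<in>Obj C. arrows_into C U \<in> Cov C U) \<and>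
     (\<forall>U\<in>Obj C. \<forall>S\<in>Cov C U. \<forall>f\<in>arrows_into C U. pullback_sieve C f S \<in> Cov C (Dom C f)) \<and>
     (\<forall>U\<in>Obj C. \<forall>S\<in>Cov C U. \<forall>R. is_sieve C U R \<and>
        (\<forall>f\<in>S. pullback_sieve C f R \<in> Cov C (Dom C f)) \<longrightarrow> R \<in> Cov C U)"

definition is_presheaf :: "('o,'m,'z) site_data_scheme \<Rightarrow> ('o \<Rightarrow> 'a set) \<Rightarrow> ('m \<Rightarrow> 'a \<Rightarrow> 'a) \<Rightarrow> bool" where
  "is_presheaf C F r \<longleftrightarrow>
     (\<forall>f\<in>Arr C. \<forall>x\<in>F (Cod C f). r f x \<in> F (Dom C f)) \<and>
     (\<forall>X\<in>Obj C. \<forall>x\<in>F X. r (Idm C X) x = x) \<and>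
     (\<forall>f\<in>Arr C. \<forall>g\<in>Arr C. Dom C f = Cod C g \<longrightarrow>
        (\<forall>x\<in>F (Cod C f). r (Cmp C f g) x = r g (r f x)))"

definition matching_family ::
  "('o,'m,'z) site_data_scheme \<Rightarrow> ('o \<Rightarrow> 'a set) \<Rightarrow> ('m \<Rightarrow> 'a \<Rightarrow> 'a) \<Rightarrow> 'm set \<Rightarrow> ('m \<Rightarrow> 'a) \<Rightarrow> bool" where
  "matching_family C F r S s \<longleftrightarrow>
     (\<forall>f\<in>S. s f \<in> F (Dom C f)) \<and>
     (\<forall>f\<in>S. \<forall>g\<in>Arr C. Cod C g = Dom C f \<longrightarrow> r g (s f) = s (Cmp C f g))"

definition is_sheaf :: "('o,'m,'z) site_data_scheme \<Rightarrow> ('o \<Rightarrow> 'a set) \<Rightarrow> ('m \<Rightarrow> 'a \<Rightarrow> 'a) \<Rightarrow> bool" where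
  "is_sheaf C F r \<longleftrightarrow> is_presheaf C F r \<and>
     (\<forall>U\<in>Obj C. \<forall>S\<in>Cov C U. \<forall>s. matching_family C F r S s \<longrightarrow>
        (\<exists>!x. x \<in> F U \<and> (\<forall>f\<in>S. r f x = s f)))"

definition subcanonical :: "('o,'m,'z) site_data_scheme \<Rightarrow> bool" where
  "subcanonical C \<longleftrightarrow> (\<forall>V\<in>Obj C.
     is_sheaf C (\<lambda>X. {h\<in>Arr C. Dom C h = X \<and> Cod C h = V}) (\<lambda>f h. Cmp C h f))"

definition is_group_sheaf :: "('o,'m,'z) site_data_scheme \<Rightarrow> ('o \<Rightarrow> 'a monoid) \<Rightarrow> ('m \<Rightarrow> 'a \<Rightarrow> 'a) \<Rightarrow> bool" where
  "is_group_sheaf C G r \<longleftrightarrow> (\<forall>U\<in>Obj C. group (G U)) \<and>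
     is_sheaf C (\<lambda>U. carrier (G U)) r \<and>
     (\<forall>f\<in>Arr C. r f \<in> hom (G (Cod C f)) (G (Dom C f)))"

definition is_sheaf_hom ::
  "('o,'m,'z) site_data_scheme \<Rightarrow> ('o \<Rightarrow> 'a monoid) \<Rightarrow> ('m \<Rightarrow> 'a \<Rightarrow> 'a) \<Rightarrow>
   ('o \<Rightarrow> 'b monoid) \<Rightarrow> ('m \<Rightarrow> 'b \<Rightarrow> 'b) \<Rightarrow> ('o \<Rightarrow> 'a \<Rightarrow> 'b) \<Rightarrow> bool" where
  "is_sheaf_hom C A rA B rB \<phi> \<longleftrightarrow>
     (\<forall>U\<in>Obj C. \<phi> U \<in> hom (A U) (B U)) \<and>
     (\<forall>f\<in>Arr C. \<forall>x\<in>carrier (A (Cod C f)). rB f (\<phi> (Cod C f) x) = \<phi> (Dom C f) (rA f x))"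

text \<open>Epimorphism of sheaves = local surjectivity.\<close>
definition sheaf_epi ::
  "('o,'m,'z) site_data_scheme \<Rightarrow> ('o \<Rightarrow> 'a monoid) \<Rightarrow>
   ('o \<Rightarrow> 'b monoid) \<Rightarrow> ('m \<Rightarrow> 'b \<Rightarrow> 'b) \<Rightarrow> ('o \<Rightarrow> 'a \<Rightarrow> 'b) \<Rightarrow> bool" where
  "sheaf_epi C A B rB \<phi> \<longleftrightarrow>
     (\<forall>U\<in>Obj C. \<forall>y\<in>carrier (B U). \<exists>S\<in>Cov C U. \<forall>f\<in>S.
        \<exists>x\<in>carrier (A (Dom C f)). \<phi> (Dom C f) x = rB f y)"

definition sheaf_mono :: "('o,'m,'z) site_data_scheme \<Rightarrow> ('o \<Rightarrow> 'a monoid) \<Rightarrow> ('o \<Rightarrow> 'a \<Rightarrow> 'b) \<Rightarrow> bool" where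
  "sheaf_mono C A \<phi> \<longleftrightarrow> (\<forall>U\<in>Obj C. inj_on (\<phi> U) (carrier (A U)))"

record ('o,'m,'a,'b) xmod =
  xG1 :: "'o \<Rightarrow> 'a monoid"
  xr1 :: "'m \<Rightarrow> 'a \<Rightarrow> 'a"
  xG0 :: "'o \<Rightarrow> 'b monoid"
  xr0 :: "'m \<Rightarrow> 'b \<Rightarrow> 'b"
  xd  :: "'o \<Rightarrow> 'a \<Rightarrow> 'b"
  xact :: "'o \<Rightarrow> 'a \<Rightarrow> 'b \<Rightarrow> 'a"         (* xact U g x = g^x (right action) *)
  xbr :: "'o \<Rightarrow> 'b \<Rightarrow> 'b \<Rightarrow> 'a"

definition crossed_module :: "('o,'m,'z) site_data_scheme \<Rightarrow> ('o,'m,'a,'b) xmod \<Rightarrow> bool" where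
  "crossed_module C X \<longleftrightarrow>
     is_group_sheaf C (xG1 X) (xr1 X) \<and> is_group_sheaf C (xG0 X) (xr0 X) \<and>
     is_sheaf_hom C (xG1 X) (xr1 X) (xG0 X) (xr0 X) (xd X) \<and>
     (\<forall>f\<in>Arr C. \<forall>g\<in>carrier (xG1 X (Cod C f)). \<forall>x\<in>carrier (xG0 X (Cod C f)).
        xr1 X f (xact X (Cod C f) g x) = xact X (Dom C f) (xr1 X f g) (xr0 X f x)) \<and>
     (\<forall>U\<in>Obj C.
       (\<forall>g\<in>carrier (xG1 X U). \<forall>x\<in>carrier (xG0 X U). xact X U g x \<in> carrier (xG1 X U)) \<and>
       (\<forall>g\<in>carrier (xG1 X U). xact X U g \<one>\<^bsub>xG0 X U\<^esub> = g) \<and>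
       (\<forall>g\<in>carrier (xG1 X U). \<forall>x\<in>carrier (xG0 X U). \<forall>y\<in>carrier (xG0 X U).
          xact X U g (x \<otimes>\<^bsub>xG0 X U\<^esub> y) = xact X U (xact X U g x) y) \<and>
       (\<forall>g\<in>carrier (xG1 X U). \<forall>h\<in>carrier (xG1 X U). \<forall>x\<in>carrier (xG0 X U).
          xact X U (g \<otimes>\<^bsub>xG1 X U\<^esub> h) x = xact X U g x \<otimes>\<^bsub>xG1 X U\<^esub> xact X U h x) \<and>
       (\<forall>g\<in>carrier (xG1 X U). \<forall>x\<in>carrier (xG0 X U).
          xd X U (xact X U g x) = inv\<^bsub>xG0 X U\<^esub> x \<otimes>\<^bsub>xG0 X U\<^esub> xd X U g \<otimes>\<^bsub>xG0 X U\<^esub> x) \<and>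
       (\<forall>g0\<in>carrier (xG1 X U). \<forall>g1\<in>carrier (xG1 X U).
          xact X U g0 (xd X U g1) = inv\<^bsub>xG1 X U\<^esub> g1 \<otimes>\<^bsub>xG1 X U\<^esub> g0 \<otimes>\<^bsub>xG1 X U\<^esub> g1))"

definition braided_crossed_module :: "('o,'m,'z) site_data_scheme \<Rightarrow> ('o,'m,'a,'b) xmod \<Rightarrow> bool" where
  "braided_crossed_module C X \<longleftrightarrow> crossed_module C X \<and>
     (\<forall>f\<in>Arr C. \<forall>x\<in>carrier (xG0 X (Cod C f)). \<forall>y\<in>carrier (xG0 X (Cod C f)).
        xr1 X f (xbr X (Cod C f) x y) = xbr X (Dom C f) (xr0 X f x) (xr0 X f y)) \<and>
     (\<forall>U\<in>Obj C.
       (\<forall>x\<in>carrier (xG0 X U). \<forall>y\<in>carrier (xG0 X U). xbr X U x y \<in> carrier (xG1 X U)) \<and>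
       (\<forall>x\<in>carrier (xG0 X U). \<forall>y\<in>carrier (xG0 X U).
          xd X U (xbr X U x y) = inv\<^bsub>xG0 X U\<^esub> y \<otimes>\<^bsub>xG0 X U\<^esub> inv\<^bsub>xG0 X U\<^esub> x
                                 \<otimes>\<^bsub>xG0 X U\<^esub> y \<otimes>\<^bsub>xG0 X U\<^esub> x) \<and>
       (\<forall>x\<in>carrier (xG0 X U). \<forall>y\<in>carrier (xG0 X U). \<forall>z\<in>carrier (xG0 X U).
          xbr X U x (y \<otimes>\<^bsub>xG0 X U\<^esub> z) = xact X U (xbr X U x y) z \<otimes>\<^bsub>xG1 X U\<^esub> xbr X U x z) \<and>
       (\<forall>x\<in>carrier (xG0 X U). \<forall>y\<in>carrier (xG0 X U). \<forall>z\<in>carrier (xG0 X U).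
          xbr X U (x \<otimes>\<^bsub>xG0 X U\<^esub> y) z = xbr X U y z \<otimes>\<^bsub>xG1 X U\<^esub> xact X U (xbr X U x z) y) \<and>
       (\<forall>x\<in>carrier (xG0 X U). \<forall>h\<in>carrier (xG1 X U).
          xbr X U x (xd X U h) = inv\<^bsub>xG1 X U\<^esub> h \<otimes>\<^bsub>xG1 X U\<^esub> xact X U h x) \<and>
       (\<forall>g\<in>carrier (xG1 X U). \<forall>y\<in>carrier (xG0 X U).
          xbr X U (xd X U g) y = inv\<^bsub>xG1 X U\<^esub> (xact X U g y) \<otimes>\<^bsub>xG1 X U\<^esub> g))"

text \<open>Over an object U, the prestack [G1 \<rightarrow> G0] has objects x \<in> G0(U) and morphisms
  (x, g) : x \<rightarrow> x \<partial>(g) with g \<in> G1(U); composition of (x,g) followed by (x\<partial>g, g') is (x, g g').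
  The braiding s_{x,y} : xy \<rightarrow> yx is the morphism (xy, {x,y}).  The gr-stack is the
  stackification; since every object is locally of this form and equality of morphisms is
  local, the identities s_{Y,X}s_{X,Y} = id and s_{X,X} = id hold in the stack iff they hold
  for all sections x, y over all U here.\<close>

definition pstk_id :: "('o,'m,'a,'b) xmod \<Rightarrow> 'o \<Rightarrow> 'b \<Rightarrow> 'b \<times> 'a" where
  "pstk_id X U x = (x, \<one>\<^bsub>xG1 X U\<^esub>)"

definition pstk_comp :: "('o,'m,'a,'b) xmod \<Rightarrow> 'o \<Rightarrow> 'b \<times> 'a \<Rightarrow> 'b \<times> 'a \<Rightarrow> 'b \<times> 'a" where
  "pstk_comp X U \<alpha> \<beta> = (fst \<alpha>, snd \<alpha> \<otimes>\<^bsub>xG1 X U\<^esub> snd \<beta>)"  (* \<alpha> first, then \<beta> *)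

definition pstk_braiding :: "('o,'m,'a,'b) xmod \<Rightarrow> 'o \<Rightarrow> 'b \<Rightarrow> 'b \<Rightarrow> 'b \<times> 'a" where
  "pstk_braiding X U x y = (x \<otimes>\<^bsub>xG0 X U\<^esub> y, xbr X U x y)"

definition symmetric_xmod :: "('o,'m,'z) site_data_scheme \<Rightarrow> ('o,'m,'a,'b) xmod \<Rightarrow> bool" where
  "symmetric_xmod C X \<longleftrightarrow> (\<forall>U\<in>Obj C. \<forall>x\<in>carrier (xG0 X U). \<forall>y\<in>carrier (xG0 X U).
     pstk_comp X U (pstk_braiding X U x y) (pstk_braiding X U y x)
       = pstk_id X U (x \<otimes>\<^bsub>xG0 X U\<^esub> y))"

definition picard_xmod :: "('o,'m,'z) site_data_scheme \<Rightarrow> ('o,'m,'a,'b) xmod \<Rightarrow> bool" where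
  "picard_xmod C X \<longleftrightarrow> symmetric_xmod C X \<and>
     (\<forall>U\<in>Obj C. \<forall>x\<in>carrier (xG0 X U).
        pstk_braiding X U x x = pstk_id X U (x \<otimes>\<^bsub>xG0 X U\<^esub> x))"

record ('o,'m,'e,'h1,'h0,'g1,'g0) butterfly =
  bE :: "'o \<Rightarrow> 'e monoid"
  brE :: "'m \<Rightarrow> 'e \<Rightarrow> 'e"
  bkap :: "'o \<Rightarrow> 'h1 \<Rightarrow> 'e"
  biot :: "'o \<Rightarrow> 'g1 \<Rightarrow> 'e"
  bpi :: "'o \<Rightarrow> 'e \<Rightarrow> 'h0"
  bj :: "'o \<Rightarrow> 'e \<Rightarrow> 'g0"

definition is_butterfly ::
  "('o,'m,'z) site_data_scheme \<Rightarrow> ('o,'m,'h1,'h0) xmod \<Rightarrow> ('o,'m,'g1,'g0) xmod \<Rightarrow>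
   ('o,'m,'e,'h1,'h0,'g1,'g0) butterfly \<Rightarrow> bool" where
  "is_butterfly C H G B \<longleftrightarrow>
     is_group_sheaf C (bE B) (brE B) \<and>
     is_sheaf_hom C (xG1 H) (xr1 H) (bE B) (brE B) (bkap B) \<and>
     is_sheaf_hom C (xG1 G) (xr1 G) (bE B) (brE B) (biot B) \<and>
     is_sheaf_hom C (bE B) (brE B) (xG0 H) (xr0 H) (bpi B) \<and>
     is_sheaf_hom C (bE B) (brE B) (xG0 G) (xr0 G) (bj B) \<and>
     sheaf_mono C (xG1 G) (biot B) \<and>
     sheaf_epi C (bE B) (xG0 H) (xr0 H) (bpi B) \<and>
     (\<forall>U\<in>Obj C.
       (\<forall>h\<in>carrier (xG1 H U). bpi B U (bkap B U h) = xd H U h) \<and>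
       (\<forall>g\<in>carrier (xG1 G U). bj B U (biot B U g) = xd G U g) \<and>
       (\<forall>h\<in>carrier (xG1 H U). bj B U (bkap B U h) = \<one>\<^bsub>xG0 G U\<^esub>) \<and>
       {e\<in>carrier (bE B U). bpi B U e = \<one>\<^bsub>xG0 H U\<^esub>} = biot B U ` carrier (xG1 G U) \<and>
       (\<forall>g\<in>carrier (xG1 G U). \<forall>e\<in>carrier (bE B U).
          biot B U (xact G U g (bj B U e)) = inv\<^bsub>bE B U\<^esub> e \<otimes>\<^bsub>bE B U\<^esub> biot B U g \<otimes>\<^bsub>bE B U\<^esub> e) \<and>
       (\<forall>h\<in>carrier (xG1 H U). \<forall>e\<in>carrier (bE B U).
          bkap B U (xact H U h (bpi B U e)) = inv\<^bsub>bE B U\<^esub> e \<otimes>\<^bsub>bE B U\<^esub> bkap B U h \<otimes>\<^bsub>bE B U\<^esub> e))"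

definition is_braided_butterfly ::
  "('o,'m,'z) site_data_scheme \<Rightarrow> ('o,'m,'h1,'h0) xmod \<Rightarrow> ('o,'m,'g1,'g0) xmod \<Rightarrow>
   ('o,'m,'e,'h1,'h0,'g1,'g0) butterfly \<Rightarrow> bool" where
  "is_braided_butterfly C H G B \<longleftrightarrow> is_butterfly C H G B \<and>
     (\<forall>U\<in>Obj C. \<forall>x\<in>carrier (bE B U). \<forall>y\<in>carrier (bE B U).
        bkap B U (xbr H U (bpi B U x) (bpi B U y)) \<otimes>\<^bsub>bE B U\<^esub> biot B U (xbr G U (bj B U x) (bj B U y))
        = inv\<^bsub>bE B U\<^esub> y \<otimes>\<^bsub>bE B U\<^esub> inv\<^bsub>bE B U\<^esub> x \<otimes>\<^bsub>bE B U\<^esub> y \<otimes>\<^bsub>bE B U\<^esub> x)"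

end

theory Submission imports Defs begin

lemma site_facts:
  assumes site: "is_site C" and S: "S \<in> Cov C U"
  shows "U \<in> Obj C" "\<And>f. f \<in> S \<Longrightarrow> f \<in> Arr C \<and> Cod C f = U \<and> Dom C f \<in> Obj C"
proof -
  show U: "U \<in> Obj C" using site S unfolding is_site_def by auto
  fix f assume f: "f \<in> S"
  have "is_sieve C U S" using site S U unfolding is_site_def by auto
  then have "f \<in> Arr C \<and> Cod C f = U" using f unfolding is_sieve_def arrows_into_def by auto
  moreover have "is_category C" using site unfolding is_site_def by auto
  ultimately show "f \<in> Arr C \<and> Cod C f = U \<and> Dom C f \<in> Obj C"
    unfolding is_category_def by auto
qed

lemma sep:
  assumes site: "is_site C" and gs: "is_group_sheaf C G r" and S: "S \<in> Cov C U"
    and z: "z \<in> carrier (G U)" and all: "\<forall>f\<in>S. r f z = \<one>\<^bsub>G (Dom C f)\<^esub>"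
  shows "z = \<one>\<^bsub>G U\<^esub>"
proof -
  have U: "U \<in> Obj C" using site_facts[OF site S] by auto
  have fS: "\<And>f. f \<in> S \<Longrightarrow> f \<in> Arr C \<and> Cod C f = U \<and> Dom C f \<in> Obj C"
    using site_facts[OF site S] by auto
  have cat: "is_category C" using site unfolding is_site_def by auto
  have grp: "\<And>V. V \<in> Obj C \<Longrightarrow> group (G V)" using gs unfolding is_group_sheaf_def by auto
  have rh: "\<And>f. f \<in> Arr C \<Longrightarrow> r f \<in> hom (G (Cod C f)) (G (Dom C f))"
    using gs unfolding is_group_sheaf_def by auto
  have obj: "\<And>g. g \<in> Arr C \<Longrightarrow> Dom C g \<in> Obj C \<and> Cod C g \<in> Obj C"
    using cat unfolding is_category_def by auto
  have r1: "\<And>g. g \<in> Arr C \<Longrightarrow> r g \<one>\<^bsub>G (Cod C g)\<^esub> = \<one>\<^bsub>G (Dom C g)\<^esub>"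
    using hom_one rh grp obj by metis
  have sh: "is_sheaf C (\<lambda>U. carrier (G U)) r" using gs unfolding is_group_sheaf_def by auto
  have mf: "matching_family C (\<lambda>U. carrier (G U)) r S (\<lambda>f. \<one>\<^bsub>G (Dom C f)\<^esub>)"
    unfolding matching_family_def
  proof (intro conjI ballI impI)
    fix f assume "f \<in> S" then show "\<one>\<^bsub>G (Dom C f)\<^esub> \<in> carrier (G (Dom C f))"
      using fS grp group.is_monoid monoid.one_closed by metis
  next
    fix f g assume f: "f \<in> S" and g: "g \<in> Arr C" and c: "Cod C g = Dom C f"
    have "Dom C (Cmp C f g) = Dom C g" using cat f g c fS unfolding is_category_def by auto
    then show "r g \<one>\<^bsub>G (Dom C f)\<^esub> = \<one>\<^bsub>G (Dom C (Cmp C f g))\<^esub>"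
      using r1[OF g] c by simp
  qed
  then have ex: "\<exists>!x. x \<in> carrier (G U) \<and> (\<forall>f\<in>S. r f x = \<one>\<^bsub>G (Dom C f)\<^esub>)"
    using sh U S unfolding is_sheaf_def by auto
  have one: "\<one>\<^bsub>G U\<^esub> \<in> carrier (G U) \<and> (\<forall>f\<in>S. r f \<one>\<^bsub>G U\<^esub> = \<one>\<^bsub>G (Dom C f)\<^esub>)"
    using r1 fS grp[OF U] group.is_monoid monoid.one_closed by metis
  show ?thesis using ex one z all by metis
qed

definition Tsym :: "('o,'m,'a,'b) xmod \<Rightarrow> 'o \<Rightarrow> 'b \<Rightarrow> 'b \<Rightarrow> 'a" where
  "Tsym X U x y = xbr X U x y \<otimes>\<^bsub>xG1 X U\<^esub> xbr X U y x"

lemma symmetric_iff: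
  "symmetric_xmod C X \<longleftrightarrow> (\<forall>U\<in>Obj C. \<forall>x\<in>carrier (xG0 X U). \<forall>y\<in>carrier (xG0 X U).
     Tsym X U x y = \<one>\<^bsub>xG1 X U\<^esub>)"
  unfolding symmetric_xmod_def pstk_comp_def pstk_braiding_def pstk_id_def Tsym_def by simp

lemma picard_iff:
  "picard_xmod C X \<longleftrightarrow> symmetric_xmod C X \<and> (\<forall>U\<in>Obj C. \<forall>x\<in>carrier (xG0 X U).
     xbr X U x x = \<one>\<^bsub>xG1 X U\<^esub>)"
  unfolding picard_xmod_def pstk_braiding_def pstk_id_def by simp

lemma bcm_facts:
  assumes site: "is_site C" and b: "braided_crossed_module C X"
  shows "\<And>V. V \<in> Obj C \<Longrightarrow> group (xG1 X V)"
    and "\<And>V. V \<in> Obj C \<Longrightarrow> group (xG0 X V)"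
    and "\<And>V x y. V \<in> Obj C \<Longrightarrow> x \<in> carrier (xG0 X V) \<Longrightarrow> y \<in> carrier (xG0 X V) \<Longrightarrow> xbr X V x y \<in> carrier (xG1 X V)"
    and "\<And>V x y. V \<in> Obj C \<Longrightarrow> x \<in> carrier (xG0 X V) \<Longrightarrow> y \<in> carrier (xG0 X V) \<Longrightarrow> Tsym X V x y \<in> carrier (xG1 X V)"
    and "\<And>f x y. f \<in> Arr C \<Longrightarrow> x \<in> carrier (xG0 X (Cod C f)) \<Longrightarrow> y \<in> carrier (xG0 X (Cod C f)) \<Longrightarrow>
          xr1 X f (xbr X (Cod C f) x y) = xbr X (Dom C f) (xr0 X f x) (xr0 X f y)"
    and "\<And>f x y. f \<in> Arr C \<Longrightarrow> x \<in> carrier (xG0 X (Cod C f)) \<Longrightarrow> y \<in> carrier (xG0 X (Cod C f)) \<Longrightarrow>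
          xr1 X f (Tsym X (Cod C f) x y) = Tsym X (Dom C f) (xr0 X f x) (xr0 X f y)"
    and "\<And>f x. f \<in> Arr C \<Longrightarrow> x \<in> carrier (xG0 X (Cod C f)) \<Longrightarrow> xr0 X f x \<in> carrier (xG0 X (Dom C f))"
proof -
  have cm: "crossed_module C X" using b unfolding braided_crossed_module_def by auto
  have cat: "is_category C" using site unfolding is_site_def by auto
  have obj: "\<And>g. g \<in> Arr C \<Longrightarrow> Dom C g \<in> Obj C \<and> Cod C g \<in> Obj C"
    using cat unfolding is_category_def by auto
  show g1: "\<And>V. V \<in> Obj C \<Longrightarrow> group (xG1 X V)" using cm unfolding crossed_module_def is_group_sheaf_def by auto
  show g0: "\<And>V. V \<in> Obj C \<Longrightarrow> group (xG0 X V)" using cm unfolding crossed_module_def is_group_sheaf_def by auto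
  show br: "\<And>V x y. V \<in> Obj C \<Longrightarrow> x \<in> carrier (xG0 X V) \<Longrightarrow> y \<in> carrier (xG0 X V) \<Longrightarrow> xbr X V x y \<in> carrier (xG1 X V)"
    using b unfolding braided_crossed_module_def by auto
  show "\<And>V x y. V \<in> Obj C \<Longrightarrow> x \<in> carrier (xG0 X V) \<Longrightarrow> y \<in> carrier (xG0 X V) \<Longrightarrow> Tsym X V x y \<in> carrier (xG1 X V)"
    unfolding Tsym_def using br g1 group.is_monoid monoid.m_closed by metis
  show rb: "\<And>f x y. f \<in> Arr C \<Longrightarrow> x \<in> carrier (xG0 X (Cod C f)) \<Longrightarrow> y \<in> carrier (xG0 X (Cod C f)) \<Longrightarrow>
          xr1 X f (xbr X (Cod C f) x y) = xbr X (Dom C f) (xr0 X f x) (xr0 X f y)"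
    using b unfolding braided_crossed_module_def by auto
  have rh: "\<And>f. f \<in> Arr C \<Longrightarrow> xr1 X f \<in> hom (xG1 X (Cod C f)) (xG1 X (Dom C f))"
    using cm unfolding crossed_module_def is_group_sheaf_def by auto
  show "\<And>f x y. f \<in> Arr C \<Longrightarrow> x \<in> carrier (xG0 X (Cod C f)) \<Longrightarrow> y \<in> carrier (xG0 X (Cod C f)) \<Longrightarrow>
          xr1 X f (Tsym X (Cod C f) x y) = Tsym X (Dom C f) (xr0 X f x) (xr0 X f y)"
    unfolding Tsym_def using rh hom_mult br rb obj by metis
  show "\<And>f x. f \<in> Arr C \<Longrightarrow> x \<in> carrier (xG0 X (Cod C f)) \<Longrightarrow> xr0 X f x \<in> carrier (xG0 X (Dom C f))"
    using cm unfolding crossed_module_def is_group_sheaf_def is_sheaf_def is_presheaf_def by auto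
qed

lemma sym_core:
  assumes site: "is_site C" and b: "braided_crossed_module C X"
    and epi: "sheaf_epi C E (xG0 X) (xr0 X) \<phi>"
    and Ystab: "\<forall>f\<in>Arr C. \<forall>y\<in>Y (Cod C f). xr0 X f y \<in> Y (Dom C f)"
    and Ysub: "\<forall>V\<in>Obj C. Y V \<subseteq> carrier (xG0 X V)"
    and base: "\<forall>V\<in>Obj C. \<forall>a\<in>carrier (E V). \<forall>y\<in>Y V. Tsym X V (\<phi> V a) y = \<one>\<^bsub>xG1 X V\<^esub>"
  shows "\<forall>U\<in>Obj C. \<forall>x\<in>carrier (xG0 X U). \<forall>y\<in>Y U. Tsym X U x y = \<one>\<^bsub>xG1 X U\<^esub>"
proof (intro ballI)
  fix U x y assume U: "U \<in> Obj C" and x: "x \<in> carrier (xG0 X U)" and y: "y \<in> Y U"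
  obtain S where S: "S \<in> Cov C U" and Sx: "\<forall>f\<in>S. \<exists>a\<in>carrier (E (Dom C f)). \<phi> (Dom C f) a = xr0 X f x"
    using epi U x unfolding sheaf_epi_def by blast
  have fS: "\<And>f. f \<in> S \<Longrightarrow> f \<in> Arr C \<and> Cod C f = U \<and> Dom C f \<in> Obj C"
    using site_facts[OF site S] by auto
  have gs: "is_group_sheaf C (xG1 X) (xr1 X)"
    using b unfolding braided_crossed_module_def crossed_module_def by auto
  have yc: "y \<in> carrier (xG0 X U)" using Ysub U y by auto
  show "Tsym X U x y = \<one>\<^bsub>xG1 X U\<^esub>"
  proof (rule sep[OF site gs S])
    show "Tsym X U x y \<in> carrier (xG1 X U)" using bcm_facts(4)[OF site b U x yc] .
    show "\<forall>f\<in>S. xr1 X f (Tsym X U x y) = \<one>\<^bsub>xG1 X (Dom C f)\<^esub>"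
    proof
      fix f assume f: "f \<in> S"
      then have fa: "f \<in> Arr C" and cf: "Cod C f = U" and df: "Dom C f \<in> Obj C" using fS by auto
      obtain a where a: "a \<in> carrier (E (Dom C f))" and pa: "\<phi> (Dom C f) a = xr0 X f x" using Sx f by blast
      have "xr1 X f (Tsym X U x y) = Tsym X (Dom C f) (xr0 X f x) (xr0 X f y)"
        using bcm_facts(6)[OF site b fa] x yc cf by auto
      also have "\<dots> = \<one>\<^bsub>xG1 X (Dom C f)\<^esub>"
        using base df a Ystab fa y cf pa by force
      finally show "xr1 X f (Tsym X U x y) = \<one>\<^bsub>xG1 X (Dom C f)\<^esub>" .
    qed
  qed
qed

lemma pic_core:
  assumes site: "is_site C" and b: "braided_crossed_module C X"
    and epi: "sheaf_epi C E (xG0 X) (xr0 X) \<phi>"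
    and base: "\<forall>V\<in>Obj C. \<forall>a\<in>carrier (E V). xbr X V (\<phi> V a) (\<phi> V a) = \<one>\<^bsub>xG1 X V\<^esub>"
  shows "\<forall>U\<in>Obj C. \<forall>x\<in>carrier (xG0 X U). xbr X U x x = \<one>\<^bsub>xG1 X U\<^esub>"
proof (intro ballI)
  fix U x assume U: "U \<in> Obj C" and x: "x \<in> carrier (xG0 X U)"
  obtain S where S: "S \<in> Cov C U" and Sx: "\<forall>f\<in>S. \<exists>a\<in>carrier (E (Dom C f)). \<phi> (Dom C f) a = xr0 X f x"
    using epi U x unfolding sheaf_epi_def by blast
  have fS: "\<And>f. f \<in> S \<Longrightarrow> f \<in> Arr C \<and> Cod C f = U \<and> Dom C f \<in> Obj C"
    using site_facts[OF site S] by auto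
  have gs: "is_group_sheaf C (xG1 X) (xr1 X)"
    using b unfolding braided_crossed_module_def crossed_module_def by auto
  show "xbr X U x x = \<one>\<^bsub>xG1 X U\<^esub>"
  proof (rule sep[OF site gs S])
    show "xbr X U x x \<in> carrier (xG1 X U)" using bcm_facts(3)[OF site b U x x] .
    show "\<forall>f\<in>S. xr1 X f (xbr X U x x) = \<one>\<^bsub>xG1 X (Dom C f)\<^esub>"
    proof
      fix f assume f: "f \<in> S"
      then have fa: "f \<in> Arr C" and cf: "Cod C f = U" and df: "Dom C f \<in> Obj C" using fS by auto
      obtain a where a: "a \<in> carrier (E (Dom C f))" and pa: "\<phi> (Dom C f) a = xr0 X f x" using Sx f by blast
      have "xr1 X f (xbr X U x x) = xbr X (Dom C f) (xr0 X f x) (xr0 X f x)"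
        using bcm_facts(5)[OF site b fa] x cf by auto
      also have "\<dots> = \<one>\<^bsub>xG1 X (Dom C f)\<^esub>"
        using base df a pa by force
      finally show "xr1 X f (xbr X U x x) = \<one>\<^bsub>xG1 X (Dom C f)\<^esub>" .
    qed
  qed
qed

lemma grp_swap:
  assumes "group G" "a \<in> carrier G" "b \<in> carrier G" "a \<otimes>\<^bsub>G\<^esub> b = \<one>\<^bsub>G\<^esub>"
  shows "b \<otimes>\<^bsub>G\<^esub> a = \<one>\<^bsub>G\<^esub>"
  using assms group.inv_comm by metis

lemma Tsym_swap:
  assumes site: "is_site C" and b: "braided_crossed_module C X" and U: "U \<in> Obj C"
    and x: "x \<in> carrier (xG0 X U)" and y: "y \<in> carrier (xG0 X U)"
    and t: "Tsym X U x y = \<one>\<^bsub>xG1 X U\<^esub>"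
  shows "Tsym X U y x = \<one>\<^bsub>xG1 X U\<^esub>"
  using grp_swap[OF bcm_facts(1)[OF site b U] bcm_facts(3)[OF site b U x y] bcm_facts(3)[OF site b U y x]] t
  unfolding Tsym_def by simp

lemma sym_full:
  assumes site: "is_site C" and b: "braided_crossed_module C X"
    and gsE: "is_group_sheaf C E rE"
    and hom: "is_sheaf_hom C E rE (xG0 X) (xr0 X) \<phi>"
    and epi: "sheaf_epi C E (xG0 X) (xr0 X) \<phi>"
    and base: "\<forall>V\<in>Obj C. \<forall>a\<in>carrier (E V). \<forall>c\<in>carrier (E V). Tsym X V (\<phi> V a) (\<phi> V c) = \<one>\<^bsub>xG1 X V\<^esub>"
  shows "symmetric_xmod C X"
proof -
  have cat: "is_category C" using site unfolding is_site_def by auto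
  have obj: "\<And>g. g \<in> Arr C \<Longrightarrow> Dom C g \<in> Obj C \<and> Cod C g \<in> Obj C"
    using cat unfolding is_category_def by auto
  have rE: "\<And>f a. f \<in> Arr C \<Longrightarrow> a \<in> carrier (E (Cod C f)) \<Longrightarrow> rE f a \<in> carrier (E (Dom C f))"
    using gsE unfolding is_group_sheaf_def is_sheaf_def is_presheaf_def by auto
  have phc: "\<And>V a. V \<in> Obj C \<Longrightarrow> a \<in> carrier (E V) \<Longrightarrow> \<phi> V a \<in> carrier (xG0 X V)"
    using hom unfolding is_sheaf_hom_def hom_def by auto
  have nat: "\<And>f a. f \<in> Arr C \<Longrightarrow> a \<in> carrier (E (Cod C f)) \<Longrightarrow> xr0 X f (\<phi> (Cod C f) a) = \<phi> (Dom C f) (rE f a)"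
    using hom unfolding is_sheaf_hom_def by auto
  have s1: "\<forall>U\<in>Obj C. \<forall>x\<in>carrier (xG0 X U). \<forall>y\<in>(\<lambda>V. \<phi> V ` carrier (E V)) U. Tsym X U x y = \<one>\<^bsub>xG1 X U\<^esub>"
  proof (rule sym_core[OF site b epi])
    show "\<forall>f\<in>Arr C. \<forall>y\<in>\<phi> (Cod C f) ` carrier (E (Cod C f)). xr0 X f y \<in> \<phi> (Dom C f) ` carrier (E (Dom C f))"
      using nat rE by blast
    show "\<forall>V\<in>Obj C. \<phi> V ` carrier (E V) \<subseteq> carrier (xG0 X V)" using phc by blast
    show "\<forall>V\<in>Obj C. \<forall>a\<in>carrier (E V). \<forall>y\<in>\<phi> V ` carrier (E V). Tsym X V (\<phi> V a) y = \<one>\<^bsub>xG1 X V\<^esub>"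
      using base by blast
  qed
  have s2: "\<forall>U\<in>Obj C. \<forall>x\<in>carrier (xG0 X U). \<forall>y\<in>carrier (xG0 X U). Tsym X U x y = \<one>\<^bsub>xG1 X U\<^esub>"
  proof (rule sym_core[OF site b epi])
    show "\<forall>f\<in>Arr C. \<forall>y\<in>carrier (xG0 X (Cod C f)). xr0 X f y \<in> carrier (xG0 X (Dom C f))"
      using bcm_facts(7)[OF site b] by blast
    show "\<forall>V\<in>Obj C. carrier (xG0 X V) \<subseteq> carrier (xG0 X V)" by blast
    show "\<forall>V\<in>Obj C. \<forall>a\<in>carrier (E V). \<forall>y\<in>carrier (xG0 X V). Tsym X V (\<phi> V a) y = \<one>\<^bsub>xG1 X V\<^esub>"
      using s1 Tsym_swap[OF site b] phc by blast
  qed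
  then show ?thesis unfolding symmetric_iff .
qed

lemma (in group) alg1:
  assumes k: "k \<in> carrier G" and i: "i \<in> carrier G" and e: "i = inv k \<otimes> i \<otimes> k"
  shows "k \<otimes> i = i \<otimes> k"
proof -
  have "k \<otimes> i = k \<otimes> (inv k \<otimes> i \<otimes> k)" using e by simp
  also have "\<dots> = i \<otimes> k" using k i by (simp add: m_assoc flip: m_assoc[of k "inv k"])
  finally show ?thesis .
qed

lemma (in group) alg2:
  assumes c: "k1 \<in> carrier G" "k2 \<in> carrier G" "i1 \<in> carrier G" "i2 \<in> carrier G" "a \<in> carrier G" "b \<in> carrier G"
    and cm: "k2 \<otimes> i1 = i1 \<otimes> k2"
    and e1: "k1 \<otimes> i1 = inv b \<otimes> inv a \<otimes> b \<otimes> a"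
    and e2: "k2 \<otimes> i2 = inv a \<otimes> inv b \<otimes> a \<otimes> b"
  shows "(k1 \<otimes> k2) \<otimes> (i1 \<otimes> i2) = \<one>"
proof -
  have "(k1 \<otimes> k2) \<otimes> (i1 \<otimes> i2) = k1 \<otimes> ((k2 \<otimes> i1) \<otimes> i2)" using c by (simp add: m_assoc)
  also have "\<dots> = (k1 \<otimes> i1) \<otimes> (k2 \<otimes> i2)" using c cm by (simp add: m_assoc)
  also have "\<dots> = (inv b \<otimes> inv a \<otimes> b \<otimes> a) \<otimes> (inv a \<otimes> inv b \<otimes> a \<otimes> b)" using e1 e2 by simp
  also have "\<dots> = \<one>" using c by (simp add: m_assoc flip: m_assoc[of a "inv a"] m_assoc[of b "inv b"] m_assoc[of "inv a" a] m_assoc[of "inv b" b])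
  finally show ?thesis .
qed

lemma bf_U:
  assumes site: "is_site C" and bH: "braided_crossed_module C H" and bG: "braided_crossed_module C G"
    and bb: "is_braided_butterfly C H G B" and U: "U \<in> Obj C"
    and a: "a \<in> carrier (bE B U)" and c: "c \<in> carrier (bE B U)"
  shows "bkap B U (Tsym H U (bpi B U a) (bpi B U c)) \<otimes>\<^bsub>bE B U\<^esub> biot B U (Tsym G U (bj B U a) (bj B U c)) = \<one>\<^bsub>bE B U\<^esub>"
    and "bkap B U (xbr H U (bpi B U a) (bpi B U a)) \<otimes>\<^bsub>bE B U\<^esub> biot B U (xbr G U (bj B U a) (bj B U a)) = \<one>\<^bsub>bE B U\<^esub>"
proof -
  have bf: "is_butterfly C H G B" using bb unfolding is_braided_butterfly_def by auto
  have gE: "group (bE B U)" using bf U unfolding is_butterfly_def is_group_sheaf_def by auto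
  have kh: "bkap B U \<in> hom (xG1 H U) (bE B U)" using bf U unfolding is_butterfly_def is_sheaf_hom_def by auto
  have ih: "biot B U \<in> hom (xG1 G U) (bE B U)" using bf U unfolding is_butterfly_def is_sheaf_hom_def by auto
  have ph: "bpi B U \<in> hom (bE B U) (xG0 H U)" using bf U unfolding is_butterfly_def is_sheaf_hom_def by auto
  have jh: "bj B U \<in> hom (bE B U) (xG0 G U)" using bf U unfolding is_butterfly_def is_sheaf_hom_def by auto
  have brd: "\<And>x y. x \<in> carrier (bE B U) \<Longrightarrow> y \<in> carrier (bE B U) \<Longrightarrow>
        bkap B U (xbr H U (bpi B U x) (bpi B U y)) \<otimes>\<^bsub>bE B U\<^esub> biot B U (xbr G U (bj B U x) (bj B U y))
        = inv\<^bsub>bE B U\<^esub> y \<otimes>\<^bsub>bE B U\<^esub> inv\<^bsub>bE B U\<^esub> x \<otimes>\<^bsub>bE B U\<^esub> y \<otimes>\<^bsub>bE B U\<^esub> x"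
    using bb U unfolding is_braided_butterfly_def by auto
  have jk: "\<And>h. h \<in> carrier (xG1 H U) \<Longrightarrow> bj B U (bkap B U h) = \<one>\<^bsub>xG0 G U\<^esub>"
    using bf U unfolding is_butterfly_def by auto
  have conj: "\<And>g e. g \<in> carrier (xG1 G U) \<Longrightarrow> e \<in> carrier (bE B U) \<Longrightarrow>
          biot B U (xact G U g (bj B U e)) = inv\<^bsub>bE B U\<^esub> e \<otimes>\<^bsub>bE B U\<^esub> biot B U g \<otimes>\<^bsub>bE B U\<^esub> e"
    using bf U unfolding is_butterfly_def by auto
  have act1: "\<And>g. g \<in> carrier (xG1 G U) \<Longrightarrow> xact G U g \<one>\<^bsub>xG0 G U\<^esub> = g"
    using bG U unfolding braided_crossed_module_def crossed_module_def by auto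
  have kc: "\<And>h. h \<in> carrier (xG1 H U) \<Longrightarrow> bkap B U h \<in> carrier (bE B U)" using kh unfolding hom_def by auto
  have ic: "\<And>h. h \<in> carrier (xG1 G U) \<Longrightarrow> biot B U h \<in> carrier (bE B U)" using ih unfolding hom_def by auto
  have pc: "\<And>e. e \<in> carrier (bE B U) \<Longrightarrow> bpi B U e \<in> carrier (xG0 H U)" using ph unfolding hom_def by auto
  have jc: "\<And>e. e \<in> carrier (bE B U) \<Longrightarrow> bj B U e \<in> carrier (xG0 G U)" using jh unfolding hom_def by auto
  have comm: "\<And>h g. h \<in> carrier (xG1 H U) \<Longrightarrow> g \<in> carrier (xG1 G U) \<Longrightarrow>
      bkap B U h \<otimes>\<^bsub>bE B U\<^esub> biot B U g = biot B U g \<otimes>\<^bsub>bE B U\<^esub> bkap B U h"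
  proof -
    fix h g assume h: "h \<in> carrier (xG1 H U)" and g: "g \<in> carrier (xG1 G U)"
    have "biot B U g = inv\<^bsub>bE B U\<^esub> (bkap B U h) \<otimes>\<^bsub>bE B U\<^esub> biot B U g \<otimes>\<^bsub>bE B U\<^esub> bkap B U h"
      using conj[OF g kc[OF h]] jk[OF h] act1[OF g] by simp
    then show "bkap B U h \<otimes>\<^bsub>bE B U\<^esub> biot B U g = biot B U g \<otimes>\<^bsub>bE B U\<^esub> bkap B U h"
      using group.alg1[OF gE kc[OF h] ic[OF g]] by simp
  qed
  have brH: "\<And>x y. x \<in> carrier (xG0 H U) \<Longrightarrow> y \<in> carrier (xG0 H U) \<Longrightarrow> xbr H U x y \<in> carrier (xG1 H U)"
    using bcm_facts(3)[OF site bH U] .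
  have brG: "\<And>x y. x \<in> carrier (xG0 G U) \<Longrightarrow> y \<in> carrier (xG0 G U) \<Longrightarrow> xbr G U x y \<in> carrier (xG1 G U)"
    using bcm_facts(3)[OF site bG U] .
  have "bkap B U (Tsym H U (bpi B U a) (bpi B U c)) = bkap B U (xbr H U (bpi B U a) (bpi B U c)) \<otimes>\<^bsub>bE B U\<^esub> bkap B U (xbr H U (bpi B U c) (bpi B U a))"
    unfolding Tsym_def using hom_mult[OF kh] brH pc a c by metis
  moreover have "biot B U (Tsym G U (bj B U a) (bj B U c)) = biot B U (xbr G U (bj B U a) (bj B U c)) \<otimes>\<^bsub>bE B U\<^esub> biot B U (xbr G U (bj B U c) (bj B U a))"
    unfolding Tsym_def using hom_mult[OF ih] brG jc a c by metis
  moreover have "(bkap B U (xbr H U (bpi B U a) (bpi B U c)) \<otimes>\<^bsub>bE B U\<^esub> bkap B U (xbr H U (bpi B U c) (bpi B U a)))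
      \<otimes>\<^bsub>bE B U\<^esub> (biot B U (xbr G U (bj B U a) (bj B U c)) \<otimes>\<^bsub>bE B U\<^esub> biot B U (xbr G U (bj B U c) (bj B U a))) = \<one>\<^bsub>bE B U\<^esub>"
    by (rule group.alg2[OF gE, where a=a and b=c])
       (use a c kc ic brH brG pc jc comm brd in auto)
  ultimately show "bkap B U (Tsym H U (bpi B U a) (bpi B U c)) \<otimes>\<^bsub>bE B U\<^esub> biot B U (Tsym G U (bj B U a) (bj B U c)) = \<one>\<^bsub>bE B U\<^esub>"
    by simp
  show "bkap B U (xbr H U (bpi B U a) (bpi B U a)) \<otimes>\<^bsub>bE B U\<^esub> biot B U (xbr G U (bj B U a) (bj B U a)) = \<one>\<^bsub>bE B U\<^esub>"
    using brd[OF a a] gE a by (simp add: group.l_inv group.is_monoid monoid.m_assoc group.inv_closed)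
qed

lemma bf_more:
  assumes bb: "is_braided_butterfly C H G B" and U: "U \<in> Obj C"
  shows "group (bE B U)"
    and "bkap B U \<in> hom (xG1 H U) (bE B U)" and "biot B U \<in> hom (xG1 G U) (bE B U)"
    and "inj_on (biot B U) (carrier (xG1 G U))"
    and "is_group_sheaf C (bE B) (brE B)"
    and "is_sheaf_hom C (bE B) (brE B) (xG0 H) (xr0 H) (bpi B)"
    and "is_sheaf_hom C (bE B) (brE B) (xG0 G) (xr0 G) (bj B)"
    and "sheaf_epi C (bE B) (xG0 H) (xr0 H) (bpi B)"
    and "\<And>e. e \<in> carrier (bE B U) \<Longrightarrow> bpi B U e \<in> carrier (xG0 H U)"
    and "\<And>e. e \<in> carrier (bE B U) \<Longrightarrow> bj B U e \<in> carrier (xG0 G U)"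
  using bb U unfolding is_braided_butterfly_def is_butterfly_def is_group_sheaf_def is_sheaf_hom_def sheaf_mono_def hom_def
  by auto

lemma bf_glob:
  assumes bb: "is_braided_butterfly C H G B"
  shows "is_sheaf_hom C (bE B) (brE B) (xG0 H) (xr0 H) (bpi B)"
    and "is_sheaf_hom C (bE B) (brE B) (xG0 G) (xr0 G) (bj B)"
    and "sheaf_epi C (bE B) (xG0 H) (xr0 H) (bpi B)"
  using bb unfolding is_braided_butterfly_def is_butterfly_def by auto

lemma one_side:
  assumes gE: "group E" and kh: "k \<in> hom A E" and ih: "i \<in> hom Bg E"
    and gA: "group A" and gB: "group Bg"
    and x: "x \<in> carrier A" and y: "y \<in> carrier Bg"
    and e: "k x \<otimes>\<^bsub>E\<^esub> i y = \<one>\<^bsub>E\<^esub>"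
  shows "x = \<one>\<^bsub>A\<^esub> \<Longrightarrow> inj_on i (carrier Bg) \<Longrightarrow> y = \<one>\<^bsub>Bg\<^esub>"
    and "y = \<one>\<^bsub>Bg\<^esub> \<Longrightarrow> inj_on k (carrier A) \<Longrightarrow> x = \<one>\<^bsub>A\<^esub>"
proof -
  have k1: "k \<one>\<^bsub>A\<^esub> = \<one>\<^bsub>E\<^esub>" using hom_one[OF kh gA gE] .
  have i1: "i \<one>\<^bsub>Bg\<^esub> = \<one>\<^bsub>E\<^esub>" using hom_one[OF ih gB gE] .
  have kc: "k x \<in> carrier E" using kh x unfolding hom_def by auto
  have ic: "i y \<in> carrier E" using ih y unfolding hom_def by auto
  show "x = \<one>\<^bsub>A\<^esub> \<Longrightarrow> inj_on i (carrier Bg) \<Longrightarrow> y = \<one>\<^bsub>Bg\<^esub>"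
  proof -
    assume "x = \<one>\<^bsub>A\<^esub>" "inj_on i (carrier Bg)"
    then have "i y = i \<one>\<^bsub>Bg\<^esub>" using e k1 i1 ic gE by (simp add: group.is_monoid)
    then show ?thesis using \<open>inj_on i (carrier Bg)\<close> y gB by (meson group.is_monoid monoid.one_closed inj_onD)
  qed
  show "y = \<one>\<^bsub>Bg\<^esub> \<Longrightarrow> inj_on k (carrier A) \<Longrightarrow> x = \<one>\<^bsub>A\<^esub>"
  proof -
    assume "y = \<one>\<^bsub>Bg\<^esub>" "inj_on k (carrier A)"
    then have "k x = k \<one>\<^bsub>A\<^esub>" using e k1 i1 kc gE by (simp add: group.is_monoid)
    then show ?thesis using \<open>inj_on k (carrier A)\<close> x gA by (meson group.is_monoid monoid.one_closed inj_onD)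
  qed
qed

theorem lemma7p4p6:
  fixes C :: "('o,'m) site_data"
    and H :: "('o,'m,'h1,'h0) xmod"
    and G :: "('o,'m,'g1,'g0) xmod"
    and B :: "('o,'m,'e,'h1,'h0,'g1,'g0) butterfly"
  assumes "is_site C" and "subcanonical C"
    and "braided_crossed_module C H" and "braided_crossed_module C G"
    and "is_braided_butterfly C H G B"
  shows "(sheaf_epi C (bE B) (xG0 G) (xr0 G) (bj B) \<longrightarrow>
            (symmetric_xmod C H \<longrightarrow> symmetric_xmod C G) \<and>
            (picard_xmod C H \<longrightarrow> picard_xmod C G))
       \<and> (sheaf_mono C (xG1 H) (bkap B) \<longrightarrow>
            (symmetric_xmod C G \<longrightarrow> symmetric_xmod C H) \<and>
            (picard_xmod C G \<longrightarrow> picard_xmod C H))"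
proof -
  note site = assms(1) and bH = assms(3) and bG = assms(4) and bb = assms(5)
  have gsE': "is_group_sheaf C (bE B) (brE B)" using bb unfolding is_braided_butterfly_def is_butterfly_def by auto
  have G1: "\<And>V. V \<in> Obj C \<Longrightarrow> group (xG1 G V)" using bcm_facts(1)[OF site bG] .
  have H1: "\<And>V. V \<in> Obj C \<Longrightarrow> group (xG1 H V)" using bcm_facts(1)[OF site bH] .
  have GT: "\<And>V x y. V \<in> Obj C \<Longrightarrow> x \<in> carrier (xG0 G V) \<Longrightarrow> y \<in> carrier (xG0 G V) \<Longrightarrow> Tsym G V x y \<in> carrier (xG1 G V)"
    using bcm_facts(4)[OF site bG] .
  have HT: "\<And>V x y. V \<in> Obj C \<Longrightarrow> x \<in> carrier (xG0 H V) \<Longrightarrow> y \<in> carrier (xG0 H V) \<Longrightarrow> Tsym H V x y \<in> carrier (xG1 H V)"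
    using bcm_facts(4)[OF site bH] .
  have Gb: "\<And>V x y. V \<in> Obj C \<Longrightarrow> x \<in> carrier (xG0 G V) \<Longrightarrow> y \<in> carrier (xG0 G V) \<Longrightarrow> xbr G V x y \<in> carrier (xG1 G V)"
    using bcm_facts(3)[OF site bG] .
  have Hb: "\<And>V x y. V \<in> Obj C \<Longrightarrow> x \<in> carrier (xG0 H V) \<Longrightarrow> y \<in> carrier (xG0 H V) \<Longrightarrow> xbr H V x y \<in> carrier (xG1 H V)"
    using bcm_facts(3)[OF site bH] .
  show ?thesis
  proof (intro conjI impI)
    assume epi: "sheaf_epi C (bE B) (xG0 G) (xr0 G) (bj B)"
    have s: "symmetric_xmod C H \<Longrightarrow> symmetric_xmod C G"
    proof -
      assume sH: "symmetric_xmod C H"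
      show "symmetric_xmod C G"
      proof (rule sym_full[OF site bG gsE' bf_glob(2)[OF bb] epi], intro ballI)
        fix V a c assume V: "V \<in> Obj C" and a: "a \<in> carrier (bE B V)" and c: "c \<in> carrier (bE B V)"
        show "Tsym G V (bj B V a) (bj B V c) = \<one>\<^bsub>xG1 G V\<^esub>"
          by (rule one_side(1)[OF bf_more(1)[OF bb V] bf_more(2)[OF bb V] bf_more(3)[OF bb V] H1[OF V] G1[OF V]
              HT[OF V] GT[OF V] bf_U(1)[OF site bH bG bb V a c]])
             (use sH V a c bf_more(4,9,10)[OF bb V] in \<open>auto simp: symmetric_iff\<close>)
      qed
    qed
    then show "symmetric_xmod C H \<Longrightarrow> symmetric_xmod C G" .
    show "picard_xmod C H \<Longrightarrow> picard_xmod C G"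
    proof -
      assume pH: "picard_xmod C H"
      have "\<forall>U\<in>Obj C. \<forall>x\<in>carrier (xG0 G U). xbr G U x x = \<one>\<^bsub>xG1 G U\<^esub>"
      proof (rule pic_core[OF site bG epi], intro ballI)
        fix V a assume V: "V \<in> Obj C" and a: "a \<in> carrier (bE B V)"
        show "xbr G V (bj B V a) (bj B V a) = \<one>\<^bsub>xG1 G V\<^esub>"
          by (rule one_side(1)[OF bf_more(1)[OF bb V] bf_more(2)[OF bb V] bf_more(3)[OF bb V] H1[OF V] G1[OF V]
              Hb[OF V] Gb[OF V] bf_U(2)[OF site bH bG bb V a a]])
             (use pH V a bf_more(4,9,10)[OF bb V] in \<open>auto simp: picard_iff\<close>)
      qed
      then show ?thesis using s pH unfolding picard_iff by blast
    qed
  next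
    assume mono: "sheaf_mono C (xG1 H) (bkap B)"
    have s: "symmetric_xmod C G \<Longrightarrow> symmetric_xmod C H"
    proof -
      assume sG: "symmetric_xmod C G"
      show "symmetric_xmod C H"
      proof (rule sym_full[OF site bH gsE' bf_glob(1)[OF bb] bf_glob(3)[OF bb]], intro ballI)
        fix V a c assume V: "V \<in> Obj C" and a: "a \<in> carrier (bE B V)" and c: "c \<in> carrier (bE B V)"
        show "Tsym H V (bpi B V a) (bpi B V c) = \<one>\<^bsub>xG1 H V\<^esub>"
          by (rule one_side(2)[OF bf_more(1)[OF bb V] bf_more(2)[OF bb V] bf_more(3)[OF bb V] H1[OF V] G1[OF V]
              HT[OF V] GT[OF V] bf_U(1)[OF site bH bG bb V a c]])
             (use sG V a c mono bf_more(9,10)[OF bb V] in \<open>auto simp: symmetric_iff sheaf_mono_def\<close>)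
      qed
    qed
    then show "symmetric_xmod C G \<Longrightarrow> symmetric_xmod C H" .
    show "picard_xmod C G \<Longrightarrow> picard_xmod C H"
    proof -
      assume pG: "picard_xmod C G"
      have "\<forall>U\<in>Obj C. \<forall>x\<in>carrier (xG0 H U). xbr H U x x = \<one>\<^bsub>xG1 H U\<^esub>"
      proof (rule pic_core[OF site bH bf_glob(3)[OF bb]], intro ballI)
        fix V a assume V: "V \<in> Obj C" and a: "a \<in> carrier (bE B V)"
        show "xbr H V (bpi B V a) (bpi B V a) = \<one>\<^bsub>xG1 H V\<^esub>"
          by (rule one_side(2)[OF bf_more(1)[OF bb V] bf_more(2)[OF bb V] bf_more(3)[OF bb V] H1[OF V] G1[OF V]
              Hb[OF V] Gb[OF V] bf_U(2)[OF site bH bG bb V a a]])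
             (use pG V a mono bf_more(9,10)[OF bb V] in \<open>auto simp: picard_iff sheaf_mono_def\<close>)
      qed
      then show ?thesis using s pG unfolding picard_iff by blast
    qed
  qed
qed

end
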